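(* Let $(M,\tau)$ be a Real manifold which is connected and simply connected. Then the sequence $$0 \longrightarrow H^0(M;\mathbb Z_2,\mathcal U(1)) \longrightarrow H^0(M,\mathcal U(1)) \xrightarrow{\ g\,\mapsto\, \bar g\,(g\circ\tau)\ } H^0(M;\mathbb Z_2,\overline{\mathcal U(1)}) \xrightarrow{\ \epsilon\ } \mathbb Z_2 \longrightarrow 0$$ is exact, where the first map is the inclusion and $\epsilon$ is defined as follows: for a Real map $f\colon M\to U(1)$ (i.e. $f\circ\tau=\bar f$) choose a smooth lift $\hat f\colon M\to\mathbb R$ with $f=e^{2\pi i\hat f}$; then $\hat f\circ\tau+\hat f$ is a constant integer $k$, and $\epsilon(f)=k \bmod 2$ (which is independent of the lift).
   Context: A Real manifold is a smooth manifold $M$ with a smooth involution $\tau\colon M\to M$. $\mathcal U(1)$ denotes the sheaf of smooth $U(1)$-valued functions on $M$; regarded as a $\mathbb Z_2$-sheaf it carries the action $f\mapsto f\circ\tau$, and $\overline{\mathcal U(1)}$ denotes the same sheaf with the $\mathbb Z_2$-action $f\mapsto \bar f\circ\tau$. $H^p(M;\mathbb Z_2,\mathcal S)$ denotes Grothendieck's equivariant sheaf cohomology and $H^p(M,\mathcal U(1))$ ordinary sheaf cohomology. Concretely, $H^0(M,\mathcal U(1))$ is the group of smooth maps $M\to U(1)$, $H^0(M;\mathbb Z_2,\mathcal U(1))$ is the subgroup of maps with $f\circ\tau=f$, and $H^0(M;\mathbb Z_2,\overline{\mathcal U(1)})$ the subgroup of maps with $f\circ\tau=\bar f$. *)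

theory Defs
  imports "HOL-Analysis.Analysis"
begin

fun smooth_k :: "nat \<Rightarrow> 'a::euclidean_space set \<Rightarrow> ('a \<Rightarrow> 'b::real_normed_vector) \<Rightarrow> bool" where
  "smooth_k 0 U f = continuous_on U f"
| "smooth_k (Suc n) U f =
     ((\<forall>x\<in>U. f differentiable (at x)) \<and>
      (\<forall>v. smooth_k n U (\<lambda>x. frechet_derivative f (at x) v)))"

definition smooth_open :: "'a::euclidean_space set \<Rightarrow> ('a \<Rightarrow> 'b::real_normed_vector) \<Rightarrow> bool" where
  "smooth_open U f \<longleftrightarrow> open U \<and> (\<forall>n. smooth_k n U f)"

definition smooth_on :: "'a::euclidean_space set \<Rightarrow> ('a \<Rightarrow> 'b::real_normed_vector) \<Rightarrow> bool" where
  "smooth_on S f \<longleftrightarrow>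
     (\<forall>x\<in>S. \<exists>U g. open U \<and> x \<in> U \<and> smooth_open U g \<and> (\<forall>y\<in>S \<inter> U. g y = f y))"

text \<open>Embedded smooth submanifold of the Euclidean space 'a, modelled on the
  Euclidean space 'b: every point has a smooth chart with smooth inverse onto an
  open subset of 'b.  (By Whitney's embedding theorem every smooth manifold is
  diffeomorphic to such a submanifold.)\<close>
definition smooth_submanifold :: "'a::euclidean_space set \<Rightarrow> 'b::euclidean_space itself \<Rightarrow> bool" where
  "smooth_submanifold S _ \<longleftrightarrow>
     (\<forall>x\<in>S. \<exists>V W (\<phi>::'a \<Rightarrow> 'b) \<psi>. open V \<and> x \<in> V \<and> open W \<and>
        homeomorphism (S \<inter> V) W \<phi> \<psi> \<and> smooth_on (S \<inter> V) \<phi> \<and> smooth_on W \<psi>)"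

definition smooth_involution :: "'a::euclidean_space set \<Rightarrow> ('a \<Rightarrow> 'a) \<Rightarrow> bool" where
  "smooth_involution S \<tau> \<longleftrightarrow> smooth_on S \<tau> \<and> \<tau> ` S \<subseteq> S \<and> (\<forall>x\<in>S. \<tau> (\<tau> x) = x)"

definition H0_U1 :: "'a::euclidean_space set \<Rightarrow> ('a \<Rightarrow> complex) set" where
  "H0_U1 S = {g. smooth_on S g \<and> (\<forall>x\<in>S. norm (g x) = 1)}"

definition H0_inv :: "'a::euclidean_space set \<Rightarrow> ('a \<Rightarrow> 'a) \<Rightarrow> ('a \<Rightarrow> complex) set" where
  "H0_inv S \<tau> = {g \<in> H0_U1 S. \<forall>x\<in>S. g (\<tau> x) = g x}"

definition H0_real :: "'a::euclidean_space set \<Rightarrow> ('a \<Rightarrow> 'a) \<Rightarrow> ('a \<Rightarrow> complex) set" where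
  "H0_real S \<tau> = {f \<in> H0_U1 S. \<forall>x\<in>S. f (\<tau> x) = cnj (f x)}"

definition real_map :: "('a \<Rightarrow> 'a) \<Rightarrow> ('a \<Rightarrow> complex) \<Rightarrow> ('a \<Rightarrow> complex)" where
  "real_map \<tau> g = (\<lambda>x. cnj (g x) * g (\<tau> x))"

definition is_lift :: "'a::euclidean_space set \<Rightarrow> ('a \<Rightarrow> complex) \<Rightarrow> ('a \<Rightarrow> real) \<Rightarrow> bool" where
  "is_lift S f h \<longleftrightarrow> smooth_on S h \<and>
     (\<forall>x\<in>S. f x = exp (2 * complex_of_real pi * \<i> * complex_of_real (h x)))"

definition eps :: "'a::euclidean_space set \<Rightarrow> ('a \<Rightarrow> 'a) \<Rightarrow> ('a \<Rightarrow> complex) \<Rightarrow> int" where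
  "eps S \<tau> f = (SOME k::int. \<exists>h. is_lift S f h \<and> (\<forall>x\<in>S. h (\<tau> x) + h x = of_int k)) mod 2"

end

theory Submission
  imports Defs
begin
lemma smooth_k_mono: "smooth_k n U f \<Longrightarrow> V \<subseteq> U \<Longrightarrow> smooth_k n V f"
  by (induction n arbitrary: f) (auto intro: continuous_on_subset)

lemma smooth_k_down: "smooth_k (Suc n) U f \<Longrightarrow> smooth_k n U f"
proof (induction n arbitrary: f)
  case 0 then show ?case
    by (auto intro!: continuous_at_imp_continuous_on differentiable_imp_continuous_within)
next
  case (Suc n) then show ?case by (metis smooth_k.simps(2))
qed

lemma smooth_k_SucD:
  assumes "smooth_k (Suc n) U f" "x \<in> U"
  shows "(f has_derivative frechet_derivative f (at x)) (at x)"
  using assms frechet_derivative_works by auto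

lemma smooth_k_cong:
  "open U \<Longrightarrow> (\<And>x. x\<in>U \<Longrightarrow> f x = g x) \<Longrightarrow> smooth_k n U f \<Longrightarrow> smooth_k n U g"
proof (induction n arbitrary: f g)
  case 0 thus ?case using continuous_on_cong by (metis smooth_k.simps(1))
next
  case (Suc n)
  have d: "(g has_derivative frechet_derivative f (at x)) (at x)" if "x\<in>U" for x
    using has_derivative_transform_within_open[OF smooth_k_SucD[OF Suc.prems(3) that] Suc.prems(1) that] Suc.prems(2)
    by blast
  have fd: "frechet_derivative g (at x) = frechet_derivative f (at x)" if "x\<in>U" for x
    using d[OF that] frechet_derivative_at by metis
  show ?case
    using Suc.prems d fd Suc.IH[of "\<lambda>x. frechet_derivative f (at x) _"]
    by (auto simp: differentiable_def)
qed

lemma smooth_k_SucI: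
  assumes "open U" "\<And>x. x\<in>U \<Longrightarrow> (f has_derivative D x) (at x)" "\<And>v. smooth_k n U (\<lambda>x. D x v)"
  shows "smooth_k (Suc n) U f"
proof -
  have fd: "frechet_derivative f (at x) = D x" if "x\<in>U" for x
    using assms(2)[OF that] frechet_derivative_at by metis
  show ?thesis using assms fd smooth_k_cong[OF assms(1), of "\<lambda>x. D x _" "\<lambda>x. frechet_derivative f (at x) _"]
    by (auto simp: differentiable_def)
qed

lemma smooth_k_const: "open U \<Longrightarrow> smooth_k n U (\<lambda>x. c)"
proof (induction n arbitrary: c)
  case 0 then show ?case by simp
next
  case (Suc n) then show ?case
    by (intro smooth_k_SucI[where D="\<lambda>x v. 0"]) auto
qed

lemma smooth_k_linear:
  "open U \<Longrightarrow> bounded_linear L \<Longrightarrow> smooth_k n U f \<Longrightarrow> smooth_k n U (\<lambda>x. L (f x))"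
proof (induction n arbitrary: f)
  case 0 then show ?case
    by (auto intro: continuous_on_compose2[OF linear_continuous_on] )
next
  case (Suc n)
  have df: "x\<in>U \<Longrightarrow> (f has_derivative frechet_derivative f (at x)) (at x)" for x
    using Suc.prems smooth_k_SucD by blast
  show ?case
  proof (rule smooth_k_SucI[where D="\<lambda>x v. L (frechet_derivative f (at x) v)"])
    show "open U" by fact
    show "x \<in> U \<Longrightarrow> ((\<lambda>x. L (f x)) has_derivative (\<lambda>v. L (frechet_derivative f (at x) v))) (at x)" for x
      using bounded_linear.has_derivative[OF Suc.prems(2) df] by blast
    show "smooth_k n U (\<lambda>x. L (frechet_derivative f (at x) v))" for v
      using Suc.IH Suc.prems by simp
  qed
qed

lemma smooth_k_add:
  "open U \<Longrightarrow> smooth_k n U f \<Longrightarrow> smooth_k n U g \<Longrightarrow> smooth_k n U (\<lambda>x. f x + g x)"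
proof (induction n arbitrary: f g)
  case 0 then show ?case by (auto intro: continuous_on_add)
next
  case (Suc n)
  have df: "x\<in>U \<Longrightarrow> (f has_derivative frechet_derivative f (at x)) (at x)" for x
    using Suc.prems smooth_k_SucD by blast
  have dg: "x\<in>U \<Longrightarrow> (g has_derivative frechet_derivative g (at x)) (at x)" for x
    using Suc.prems smooth_k_SucD by blast
  show ?case
  proof (rule smooth_k_SucI[where D="\<lambda>x v. frechet_derivative f (at x) v + frechet_derivative g (at x) v"])
    show "open U" by fact
    show "x \<in> U \<Longrightarrow> ((\<lambda>x. f x + g x) has_derivative (\<lambda>v. frechet_derivative f (at x) v + frechet_derivative g (at x) v)) (at x)" for x
      using has_derivative_add[OF df dg] by blast
    show "smooth_k n U (\<lambda>x. frechet_derivative f (at x) v + frechet_derivative g (at x) v)" for v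
      using Suc.IH Suc.prems by simp
  qed
qed

lemma smooth_k_sum:
  assumes "open U" "finite I" "\<And>i. i\<in>I \<Longrightarrow> smooth_k n U (F i)"
  shows "smooth_k n U (\<lambda>x. \<Sum>i\<in>I. F i x)"
  using assms(2,3)
proof (induction I rule: finite_induct)
  case empty then show ?case by (simp add: smooth_k_const assms(1))
next
  case (insert a I) then show ?case by (simp add: smooth_k_add assms(1))
qed

lemma smooth_k_bilinear:
  fixes B :: "'b::real_normed_vector \<Rightarrow> 'c::real_normed_vector \<Rightarrow> 'd::real_normed_vector"
  shows "open U \<Longrightarrow> bounded_bilinear B \<Longrightarrow> smooth_k n U f \<Longrightarrow> smooth_k n U g \<Longrightarrow>
   smooth_k n U (\<lambda>x. B (f x) (g x))"
proof (induction n arbitrary: f g)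
  case 0 then show ?case by (auto intro: bounded_bilinear.continuous_on)
next
  case (Suc n)
  have df: "x\<in>U \<Longrightarrow> (f has_derivative frechet_derivative f (at x)) (at x)" for x
    using Suc.prems smooth_k_SucD by blast
  have dg: "x\<in>U \<Longrightarrow> (g has_derivative frechet_derivative g (at x)) (at x)" for x
    using Suc.prems smooth_k_SucD by blast
  have f: "smooth_k n U f" and g: "smooth_k n U g" using Suc.prems smooth_k_down by blast+
  show ?case
  proof (rule smooth_k_SucI[where D="\<lambda>x v. B (f x) (frechet_derivative g (at x) v) + B (frechet_derivative f (at x) v) (g x)"])
    show "open U" by fact
    show "x \<in> U \<Longrightarrow> ((\<lambda>x. B (f x) (g x)) has_derivative (\<lambda>v. B (f x) (frechet_derivative g (at x) v) + B (frechet_derivative f (at x) v) (g x))) (at x)" for x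
      using bounded_bilinear.FDERIV[OF Suc.prems(2) df dg] by blast
    show "smooth_k n U (\<lambda>x. B (f x) (frechet_derivative g (at x) v) + B (frechet_derivative f (at x) v) (g x))" for v
      apply (rule smooth_k_add[OF Suc.prems(1)])
      using Suc.IH Suc.prems f g by simp_all
  qed
qed

lemma smooth_k_mult:
  fixes f g :: "_ \<Rightarrow> 'b::real_normed_algebra"
  assumes "open U" "smooth_k n U f" "smooth_k n U g" shows "smooth_k n U (\<lambda>x. f x * g x)"
  by (rule smooth_k_bilinear[OF assms(1) bounded_bilinear_mult assms(2,3)])

lemma smooth_k_scaleR:
  assumes "open U" "smooth_k n U f" "smooth_k n U g" shows "smooth_k n U (\<lambda>x. f x *\<^sub>R g x)"
  by (rule smooth_k_bilinear[OF assms(1) bounded_bilinear_scaleR assms(2,3)])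

lemma smooth_k_uminus:
  fixes f :: "_ \<Rightarrow> 'b::real_normed_vector"
  assumes "open U" "smooth_k n U f" shows "smooth_k n U (\<lambda>x. - f x)"
proof -
  have "bounded_linear (\<lambda>x::'b. - x)" by (rule bounded_linear_minus[OF bounded_linear_ident])
  from smooth_k_linear[OF assms(1) this assms(2)] show ?thesis .
qed

lemma smooth_k_inverse:
  fixes f :: "_ \<Rightarrow> 'b::real_normed_div_algebra"
  shows "open U \<Longrightarrow> smooth_k n U f \<Longrightarrow> (\<And>x. x\<in>U \<Longrightarrow> f x \<noteq> 0) \<Longrightarrow> smooth_k n U (\<lambda>x. inverse (f x))"
proof (induction n arbitrary: f)
  case 0 then show ?case by (auto intro: continuous_on_inverse)
next
  case (Suc n)
  have df: "x\<in>U \<Longrightarrow> (f has_derivative frechet_derivative f (at x)) (at x)" for x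
    using Suc.prems smooth_k_SucD by blast
  have f: "smooth_k n U f" using Suc.prems smooth_k_down by blast
  have i: "smooth_k n U (\<lambda>x. inverse (f x))" using Suc f by blast
  show ?case
  proof (rule smooth_k_SucI[where D="\<lambda>x v. - (inverse (f x) * frechet_derivative f (at x) v * inverse (f x))"])
    show "open U" by fact
    show "((\<lambda>x. inverse (f x)) has_derivative (\<lambda>v. - (inverse (f x) * frechet_derivative f (at x) v * inverse (f x)))) (at x)" if "x \<in> U" for x
      using Deriv.has_derivative_inverse[OF Suc.prems(3)[OF that] df[OF that]] .
    show "smooth_k n U (\<lambda>x. - (inverse (f x) * frechet_derivative f (at x) v * inverse (f x)))" for v
      using Suc.prems i by (intro smooth_k_uminus smooth_k_mult) simp_all
  qed
qed

lemma smooth_k_exp: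
  fixes f :: "_ \<Rightarrow> complex"
  shows "open U \<Longrightarrow> smooth_k n U f \<Longrightarrow> smooth_k n U (\<lambda>x. exp (f x))"
proof (induction n arbitrary: f)
  case 0 then show ?case by (auto intro: continuous_on_exp)
next
  case (Suc n)
  have e: "(exp has_derivative (*) (exp z)) (at z)" for z :: complex
    using DERIV_exp has_field_derivative_def by blast
  have df: "x\<in>U \<Longrightarrow> (f has_derivative frechet_derivative f (at x)) (at x)" for x
    using Suc.prems smooth_k_SucD by blast
  have f: "smooth_k n U f" using Suc.prems smooth_k_down by blast
  have i: "smooth_k n U (\<lambda>x. exp (f x))" using Suc f by blast
  show ?case
  proof (rule smooth_k_SucI[where D="\<lambda>x v. exp (f x) * frechet_derivative f (at x) v"])
    show "open U" by fact
    show "((\<lambda>x. exp (f x)) has_derivative (\<lambda>v. exp (f x) * frechet_derivative f (at x) v)) (at x)" if "x \<in> U" for x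
      using has_derivative_compose[OF df[OF that] e] .
    show "smooth_k n U (\<lambda>x. exp (f x) * frechet_derivative f (at x) v)" for v
      using Suc.prems i by (intro smooth_k_mult) simp_all
  qed
qed

lemma smooth_k_Ln:
  fixes f :: "_ \<Rightarrow> complex"
  assumes a: "open U" "smooth_k n U f" "\<And>x. x\<in>U \<Longrightarrow> f x \<notin> \<real>\<^sub>\<le>\<^sub>0"
  shows "smooth_k n U (\<lambda>x. Ln (f x))"
proof (cases n)
  case 0
  then show ?thesis using a by (auto intro: continuous_on_Ln')
next
  case (Suc m)
  have e: "(Ln has_derivative (*) (inverse (f x))) (at (f x))" if "x \<in> U" for x
    using has_field_derivative_Ln[OF a(3)[OF that]] has_field_derivative_def by blast
  have nz: "x \<in> U \<Longrightarrow> f x \<noteq> 0" for x using a(3) by fastforce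
  have df: "x\<in>U \<Longrightarrow> (f has_derivative frechet_derivative f (at x)) (at x)" for x
    using a Suc smooth_k_SucD by blast
  have f: "smooth_k m U f" using a Suc smooth_k_down by blast
  have i: "smooth_k m U (\<lambda>x. inverse (f x))" using a f smooth_k_inverse nz by blast
  show ?thesis unfolding Suc
  proof (rule smooth_k_SucI[where D="\<lambda>x v. inverse (f x) * frechet_derivative f (at x) v"])
    show "open U" by fact
    show "((\<lambda>x. Ln (f x)) has_derivative (\<lambda>v. inverse (f x) * frechet_derivative f (at x) v)) (at x)" if "x \<in> U" for x
      using has_derivative_compose[OF df[OF that] e[OF that]] .
    show "smooth_k m U (\<lambda>x. inverse (f x) * frechet_derivative f (at x) v)" for v
      using a Suc i by (intro smooth_k_mult) simp_all
  qed
qed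

lemma linear_basis_expand:
  fixes L :: "'a::euclidean_space \<Rightarrow> 'b::real_vector"
  assumes "linear L"
  shows "L w = (\<Sum>b\<in>Basis. (w \<bullet> b) *\<^sub>R L b)"
proof -
  have "L w = L (\<Sum>b\<in>Basis. (w \<bullet> b) *\<^sub>R b)" by (simp add: euclidean_representation)
  also have "\<dots> = (\<Sum>b\<in>Basis. (w \<bullet> b) *\<^sub>R L b)"
    using assms by (simp add: linear_sum linear_scale)
  finally show ?thesis .
qed

lemma smooth_k_compose:
  fixes T :: "'a::euclidean_space \<Rightarrow> 'c::euclidean_space" and g :: "'c \<Rightarrow> 'b::real_normed_vector"
  shows "open U \<Longrightarrow> open V \<Longrightarrow> T ` U \<subseteq> V \<Longrightarrow> smooth_k n U T \<Longrightarrow> smooth_k n V g \<Longrightarrow>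
     smooth_k n U (\<lambda>x. g (T x))"
proof (induction n arbitrary: g T)
  case 0 then show ?case by (auto intro: continuous_on_compose2)
next
  case (Suc n)
  let ?D = "\<lambda>x v. \<Sum>b\<in>Basis. (frechet_derivative T (at x) v \<bullet> b) *\<^sub>R frechet_derivative g (at (T x)) b"
  have hd: "((\<lambda>x. g (T x)) has_derivative ?D x) (at x)" if "x \<in> U" for x
  proof -
    have TU: "T x \<in> V" using Suc.prems that by blast
    have gd: "(g has_derivative frechet_derivative g (at (T x))) (at (T x))"
      using smooth_k_SucD[OF Suc.prems(5) TU] .
    have lin: "linear (frechet_derivative g (at (T x)))"
      using gd has_derivative_linear by blast
    show ?thesis
      apply (rule has_derivative_eq_rhs[OF has_derivative_compose[OF smooth_k_SucD[OF Suc.prems(4) that] gd]])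
      apply (rule ext)
      apply (rule linear_basis_expand[OF lin])
      done
  qed
  have Tn: "smooth_k n U T" using Suc.prems(4) smooth_k_down by blast
  have sm: "smooth_k n U (\<lambda>x. ?D x v)" for v
  proof (intro smooth_k_sum[OF Suc.prems(1)] finite_Basis smooth_k_scaleR[OF Suc.prems(1)])
    fix b :: 'c assume "b \<in> Basis"
    show "smooth_k n U (\<lambda>x. frechet_derivative T (at x) v \<bullet> b)"
      using Suc.prems by (auto intro!: smooth_k_linear[OF _ bounded_linear_inner_left])
    show "smooth_k n U (\<lambda>x. frechet_derivative g (at (T x)) b)"
      using Suc.prems Tn by (intro Suc.IH[where g="\<lambda>y. frechet_derivative g (at y) b"]) auto
  qed
  show ?case by (rule smooth_k_SucI[OF Suc.prems(1) hd sm])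
qed

lemma smooth_on_alt: "smooth_on S f \<longleftrightarrow>
  (\<forall>x\<in>S. \<exists>U g. open U \<and> x \<in> U \<and> (\<forall>n. smooth_k n U g) \<and> (\<forall>y\<in>S \<inter> U. g y = f y))"
  unfolding smooth_on_def smooth_open_def by (intro ball_cong refl) blast

lemma smooth_onE:
  assumes "smooth_on S f" "x \<in> S"
  obtains U g where "open U" "x \<in> U" "\<And>n. smooth_k n U g" "\<And>y. y \<in> S \<Longrightarrow> y \<in> U \<Longrightarrow> g y = f y"
proof -
  from assms(1) assms(2) obtain U g where "open U" "x \<in> U" "\<forall>n. smooth_k n U g" "\<forall>y\<in>S \<inter> U. g y = f y"
    unfolding smooth_on_alt by meson
  then show ?thesis using that by blast
qed

lemma smooth_onI:
  assumes "\<And>x. x \<in> S \<Longrightarrow> \<exists>U g. open U \<and> x \<in> U \<and> (\<forall>n. smooth_k n U g) \<and> (\<forall>y\<in>S \<inter> U. g y = f y)"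
  shows "smooth_on S f"
  using assms unfolding smooth_on_alt by simp

lemma smooth_on_cong: "smooth_on S f \<Longrightarrow> (\<And>x. x\<in>S \<Longrightarrow> f x = g x) \<Longrightarrow> smooth_on S g"
  unfolding smooth_on_alt by (metis (no_types, lifting) IntD1)

lemma smooth_on_const: "smooth_on S (\<lambda>x. c)"
  unfolding smooth_on_alt using smooth_k_const[OF open_UNIV] by blast

lemma smooth_on_continuous:
  assumes "smooth_on S f" shows "continuous_on S f"
  unfolding continuous_on_eq_continuous_within
proof
  fix x assume x: "x \<in> S"
  obtain U g where U: "open U" "x \<in> U" "\<And>n. smooth_k n U g" "\<And>y. y \<in> S \<Longrightarrow> y \<in> U \<Longrightarrow> g y = f y"
    using smooth_onE[OF assms x] by blast
  have "continuous_on U g" using U(3)[of 0] by simp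
  then have "isCont g x" using U continuous_on_eq_continuous_at by blast
  then have "continuous (at x within S) g" by (rule continuous_at_imp_continuous_at_within)
  then show "continuous (at x within S) f"
    by (rule continuous_transform_within_openin[where S="S \<inter> U"]) (use U x in \<open>auto intro: openin_open_Int\<close>)
qed

lemma smooth_on_linear:
  assumes "bounded_linear L" "smooth_on S f" shows "smooth_on S (\<lambda>x. L (f x))"
proof (rule smooth_onI)
  fix x assume x: "x \<in> S"
  obtain U g where U: "open U" "x \<in> U" "\<And>n. smooth_k n U g" "\<And>y. y \<in> S \<Longrightarrow> y \<in> U \<Longrightarrow> g y = f y"
    using smooth_onE[OF assms(2) x] by blast
  show "\<exists>U g. open U \<and> x \<in> U \<and> (\<forall>n. smooth_k n U g) \<and> (\<forall>y\<in>S \<inter> U. g y = L (f y))"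
    by (rule exI[of _ U], rule exI[of _ "\<lambda>x. L (g x)"]) (use U smooth_k_linear[OF U(1) assms(1) U(3)] in auto)
qed

lemma smooth_on_bilinear:
  fixes B :: "'b::real_normed_vector \<Rightarrow> 'c::real_normed_vector \<Rightarrow> 'd::real_normed_vector"
  assumes "bounded_bilinear B" "smooth_on S f" "smooth_on S g" shows "smooth_on S (\<lambda>x. B (f x) (g x))"
proof (rule smooth_onI)
  fix x assume x: "x \<in> S"
  obtain U1 g1 where U1: "open U1" "x \<in> U1" "\<And>n. smooth_k n U1 g1" "\<And>y. y \<in> S \<Longrightarrow> y \<in> U1 \<Longrightarrow> g1 y = f y"
    using smooth_onE[OF assms(2) x] by blast
  obtain U2 g2 where U2: "open U2" "x \<in> U2" "\<And>n. smooth_k n U2 g2" "\<And>y. y \<in> S \<Longrightarrow> y \<in> U2 \<Longrightarrow> g2 y = g y"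
    using smooth_onE[OF assms(3) x] by blast
  have "smooth_k n (U1 \<inter> U2) (\<lambda>x. B (g1 x) (g2 x))" for n
    using smooth_k_bilinear[OF _ assms(1) smooth_k_mono[OF U1(3)] smooth_k_mono[OF U2(3)]] U1 U2 by blast
  then show "\<exists>U h. open U \<and> x \<in> U \<and> (\<forall>n. smooth_k n U h) \<and> (\<forall>y\<in>S \<inter> U. h y = B (f y) (g y))"
    by (intro exI[of _ "U1 \<inter> U2"] exI[of _ "\<lambda>x. B (g1 x) (g2 x)"]) (use U1 U2 in auto)
qed

lemma smooth_on_add:
  assumes "smooth_on S f" "smooth_on S g" shows "smooth_on S (\<lambda>x. f x + g x)"
proof (rule smooth_onI)
  fix x assume x: "x \<in> S"
  obtain U1 g1 where U1: "open U1" "x \<in> U1" "\<And>n. smooth_k n U1 g1" "\<And>y. y \<in> S \<Longrightarrow> y \<in> U1 \<Longrightarrow> g1 y = f y"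
    using smooth_onE[OF assms(1) x] by blast
  obtain U2 g2 where U2: "open U2" "x \<in> U2" "\<And>n. smooth_k n U2 g2" "\<And>y. y \<in> S \<Longrightarrow> y \<in> U2 \<Longrightarrow> g2 y = g y"
    using smooth_onE[OF assms(2) x] by blast
  have "smooth_k n (U1 \<inter> U2) (\<lambda>x. g1 x + g2 x)" for n
    using smooth_k_add[OF _ smooth_k_mono[OF U1(3)] smooth_k_mono[OF U2(3)]] U1 U2 by blast
  then show "\<exists>U h. open U \<and> x \<in> U \<and> (\<forall>n. smooth_k n U h) \<and> (\<forall>y\<in>S \<inter> U. h y = f y + g y)"
    by (intro exI[of _ "U1 \<inter> U2"] exI[of _ "\<lambda>x. g1 x + g2 x"]) (use U1 U2 in auto)
qed

lemma smooth_on_mult: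
  fixes f g :: "_ \<Rightarrow> 'b::real_normed_algebra"
  assumes "smooth_on S f" "smooth_on S g" shows "smooth_on S (\<lambda>x. f x * g x)"
  by (rule smooth_on_bilinear[OF bounded_bilinear_mult assms])

lemma smooth_on_exp:
  fixes f :: "_ \<Rightarrow> complex"
  assumes "smooth_on S f" shows "smooth_on S (\<lambda>x. exp (f x))"
proof (rule smooth_onI)
  fix x assume x: "x \<in> S"
  obtain U g where U: "open U" "x \<in> U" "\<And>n. smooth_k n U g" "\<And>y. y \<in> S \<Longrightarrow> y \<in> U \<Longrightarrow> g y = f y"
    using smooth_onE[OF assms x] by blast
  show "\<exists>U h. open U \<and> x \<in> U \<and> (\<forall>n. smooth_k n U h) \<and> (\<forall>y\<in>S \<inter> U. h y = exp (f y))"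
    by (intro exI[of _ U] exI[of _ "\<lambda>x. exp (g x)"]) (use U smooth_k_exp[OF U(1) U(3)] in auto)
qed

lemma smooth_on_compose:
  fixes T :: "'a::euclidean_space \<Rightarrow> 'c::euclidean_space" and g :: "'c \<Rightarrow> 'b::real_normed_vector"
  assumes "smooth_on S T" "T ` S \<subseteq> S'" "smooth_on S' g"
  shows "smooth_on S (\<lambda>x. g (T x))"
proof (rule smooth_onI)
  fix x assume x: "x \<in> S"
  obtain U1 T1 where U1: "open U1" "x \<in> U1" "\<And>n. smooth_k n U1 T1" "\<And>y. y \<in> S \<Longrightarrow> y \<in> U1 \<Longrightarrow> T1 y = T y"
    using smooth_onE[OF assms(1) x] by blast
  have Tx: "T x \<in> S'" using assms(2) x by blast
  obtain U2 g2 where U2: "open U2" "T x \<in> U2" "\<And>n. smooth_k n U2 g2" "\<And>y. y \<in> S' \<Longrightarrow> y \<in> U2 \<Longrightarrow> g2 y = g y"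
    using smooth_onE[OF assms(3) Tx] by blast
  define U where "U = U1 \<inter> T1 -` U2"
  have cT1: "continuous_on U1 T1" using U1(3)[of 0] by simp
  have oU: "open U" unfolding U_def using continuous_open_preimage[OF cT1 U1(1) U2(1)] .
  have xU: "x \<in> U" unfolding U_def using U1 U2 x by auto
  have "smooth_k n U (\<lambda>x. g2 (T1 x))" for n
    by (rule smooth_k_compose[OF oU U2(1) _ smooth_k_mono[OF U1(3)] U2(3)]) (auto simp: U_def)
  moreover have "\<forall>y\<in>S \<inter> U. g2 (T1 y) = g (T y)"
    using U1(4) U2(4) assms(2) unfolding U_def by auto
  ultimately show "\<exists>U h. open U \<and> x \<in> U \<and> (\<forall>n. smooth_k n U h) \<and> (\<forall>y\<in>S \<inter> U. h y = g (T y))"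
    using oU xU by blast
qed

abbreviation E :: "real \<Rightarrow> complex" where
  "E t \<equiv> exp (2 * complex_of_real pi * \<i> * complex_of_real t)"

lemma E_add: "E (a + b) = E a * E b"
  by (simp add: exp_add[symmetric] distrib_left)

lemma E_minus: "E (- a) = cnj (E a)"
  by (simp add: exp_cnj)

lemma E_int: "E (of_int n) = 1"
  unfolding exp_eq_1 by (intro conjI exI[of _ n]) simp_all

lemma E_eq_1: "E t = 1 \<Longrightarrow> \<exists>n::int. t = of_int n"
proof -
  assume "E t = 1"
  then obtain n::int where "Im (2 * complex_of_real pi * \<i> * complex_of_real t) = of_int (2 * n) * pi"
    unfolding exp_eq_1 by blast
  then have "2 * pi * t = 2 * of_int n * pi" by simp
  then have "t = of_int n" using pi_gt_zero by (simp add: algebra_simps)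
  then show ?thesis by blast
qed

lemma E_eq: "E a = E b \<Longrightarrow> \<exists>n::int. a - b = of_int n"
proof -
  assume "E a = E b"
  then have "E (a - b) = 1"
    using E_add[of "a - b" b] by (simp add: exp_not_eq_zero)
  then show ?thesis using E_eq_1 by blast
qed

lemma norm_E: "norm (E t) = 1"
  by (simp add: norm_exp_eq_Re)

lemma int_valued_const:
  fixes F :: "'a::topological_space \<Rightarrow> real"
  assumes "connected M" "continuous_on M F" "\<And>x. x \<in> M \<Longrightarrow> \<exists>n::int. F x = of_int n"
  shows "F constant_on M"
proof (rule continuous_discrete_range_constant[OF assms(1,2)])
  fix x assume x: "x \<in> M"
  show "\<exists>e>0. \<forall>y. y \<in> M \<and> F y \<noteq> F x \<longrightarrow> e \<le> norm (F y - F x)"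
  proof (intro exI[of _ 1] conjI allI impI)
    fix y assume y: "y \<in> M \<and> F y \<noteq> F x"
    obtain n m :: int where "F x = of_int n" "F y = of_int m" using assms(3) x y by blast
    with y show "1 \<le> norm (F y - F x)" by auto
  qed simp
qed

lemma submanifold_lpc:
  assumes "smooth_submanifold M TYPE('b::euclidean_space)"
  shows "locally path_connected M"
proof (rule locallyI)
  fix w x assume w: "openin (top_of_set M) w" and x: "x \<in> w"
  have xM: "x \<in> M" using w x openin_imp_subset by blast
  obtain V W and \<phi> :: "'a \<Rightarrow> 'b" and \<psi> where VW: "open V" "x \<in> V" "open W"
     "homeomorphism (M \<inter> V) W \<phi> \<psi>"
  proof -
    have "\<forall>x\<in>M. \<exists>V W (\<phi>::'a \<Rightarrow> 'b) \<psi>. open V \<and> x \<in> V \<and> open W \<and>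
        homeomorphism (M \<inter> V) W \<phi> \<psi> \<and> smooth_on (M \<inter> V) \<phi> \<and> smooth_on W \<psi>"
      using assms unfolding smooth_submanifold_def .
    then have "\<exists>V W (\<phi>::'a \<Rightarrow> 'b) \<psi>. open V \<and> x \<in> V \<and> open W \<and> homeomorphism (M \<inter> V) W \<phi> \<psi>"
      using xM by meson
    then show ?thesis using that by blast
  qed
  have "locally path_connected W"
  proof (rule locally_open_subset[OF locally_path_connected_UNIV])
    show "openin (top_of_set UNIV) W" using VW(3) open_openin subtopology_UNIV by metis
  qed
  moreover have "locally path_connected (M \<inter> V) \<longleftrightarrow> locally path_connected W"
  proof (rule homeomorphism_locally[OF VW(4)])
    fix S T assume "homeomorphism S T \<phi> \<psi>"
    then have "S homeomorphic T" unfolding homeomorphic_def by blast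
    then show "path_connected S \<longleftrightarrow> path_connected T" by (rule homeomorphic_path_connectedness)
  qed
  ultimately have lpc: "locally path_connected (M \<inter> V)" by blast
  obtain Ob where Ob: "open Ob" "w = M \<inter> Ob" using w openin_open by blast
  have "w \<inter> V = (M \<inter> V) \<inter> Ob" using Ob by auto
  then have "openin (top_of_set (M \<inter> V)) (w \<inter> V)"
    using Ob(1) by (simp add: openin_open_Int)
  then obtain U0 V0 where U0: "openin (top_of_set (M \<inter> V)) U0" "path_connected V0" "x \<in> U0" "U0 \<subseteq> V0" "V0 \<subseteq> w \<inter> V"
    using locallyE[OF lpc] x VW(2) by blast
  have "openin (top_of_set M) (M \<inter> V)" using VW(1) by (simp add: openin_open_Int)
  then have "openin (top_of_set M) U0" using U0(1) openin_trans by blast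
  then show "\<exists>U V. openin (top_of_set M) U \<and> path_connected V \<and> x \<in> U \<and> U \<subseteq> V \<and> V \<subseteq> w"
    using U0 by blast
qed

lemma E_div: "E (t / (2*pi)) = exp (\<i> * complex_of_real t)"
proof -
  have "2 * complex_of_real pi * \<i> * complex_of_real (t / (2*pi)) = \<i> * complex_of_real t"
    using pi_gt_zero by (simp add: of_real_divide field_simps)
  then show ?thesis by simp
qed

lemma Re_pos_notin: "0 < Re z \<Longrightarrow> z \<notin> \<real>\<^sub>\<le>\<^sub>0"
  by (simp add: complex_nonpos_Reals_iff)

lemma continuous_lift:
  fixes M :: "'a::real_normed_vector set"
  assumes lpc: "locally path_connected M" and sc: "simply_connected M"
    and cf: "continuous_on M f" and nf: "\<And>x. x\<in>M \<Longrightarrow> norm (f x) = 1"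
  obtains h where "continuous_on M h" "\<And>x. x\<in>M \<Longrightarrow> f x = E (h x)"
proof -
  have nz: "x\<in>M \<Longrightarrow> f x \<noteq> 0" for x using nf by force
  obtain g where g: "continuous_on M g" "\<And>x. x\<in>M \<Longrightarrow> f x = exp (g x)"
    using continuous_logarithm_on_simply_connected[OF cf sc lpc nz] by blast
  define h where "h x = Im (g x) / (2*pi)" for x
  have "continuous_on M h" unfolding h_def by (intro continuous_intros g(1)) auto
  moreover have "f x = E (h x)" if "x\<in>M" for x
  proof -
    have "exp (Re (g x)) = 1" using nf[OF that] g(2)[OF that] by (simp add: norm_exp_eq_Re)
    then have "Re (g x) = 0" by simp
    then have "g x = \<i> * of_real (Im (g x))" by (simp add: complex_eq_iff)
    then show ?thesis using g(2)[OF that] E_div unfolding h_def by metis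
  qed
  ultimately show ?thesis using that by blast
qed

lemma smooth_lift:
  assumes sf: "smooth_on M f" and nf: "\<And>x. x\<in>M \<Longrightarrow> norm (f x) = 1"
    and ch: "continuous_on M h" and fh: "\<And>x. x\<in>M \<Longrightarrow> f x = E (h x)"
  shows "smooth_on M h"
proof (rule smooth_onI)
  fix x0 assume x0: "x0 \<in> M"
  obtain U G where U: "open U" "x0 \<in> U" "\<And>n. smooth_k n U G" "\<And>y. y\<in>M \<Longrightarrow> y\<in>U \<Longrightarrow> G y = f y"
    using smooth_onE[OF sf x0] by blast
  define a where "a = cnj (f x0)"
  have na: "norm a = 1" unfolding a_def using nf[OF x0] by simp
  have fa: "f x0 * a = 1" unfolding a_def
    using complex_norm_square[of "f x0"] nf[OF x0] by simp
  obtain Ob where Ob: "open Ob" "Ob \<inter> M = h -` ball (h x0) (1/4) \<inter> M"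
    using ch unfolding continuous_on_open_invariant by (meson open_ball)
  have cG: "continuous_on U (\<lambda>y. G y * a)" using U(3)[of 0] by (auto intro: continuous_intros)
  define U' where "U' = (U \<inter> (\<lambda>y. G y * a) -` {z. 0 < Re z}) \<inter> Ob"
  have oH: "open {z::complex. 0 < Re z}" by (intro open_Collect_less continuous_intros)
  have oU': "open U'" unfolding U'_def
    using continuous_open_preimage[OF cG U(1) oH] Ob(1) by blast
  have "x0 \<in> Ob" using Ob(2) x0 by auto
  moreover have "G x0 * a = 1" using U(4)[OF x0 U(2)] fa by simp
  then have "x0 \<in> (\<lambda>y. G y * a) -` {z. 0 < Re z}" by (simp only: vimage_eq mem_Collect_eq) simp
  ultimately have x0U': "x0 \<in> U'" unfolding U'_def using U(2) by blast
  have U'U: "U' \<subseteq> U" unfolding U'_def by blast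
  have pos: "y \<in> U' \<Longrightarrow> 0 < Re (G y * a)" for y unfolding U'_def by blast
  define H where "H y = h x0 + Im (Ln (G y * a)) / (2*pi)" for y
  have sH: "smooth_k n U' H" for n
  proof -
    have s1: "smooth_k n U' (\<lambda>y. G y * a)"
      by (rule smooth_k_mult[OF oU' smooth_k_mono[OF U(3) U'U] smooth_k_const[OF oU']])
    have s2: "smooth_k n U' (\<lambda>y. Ln (G y * a))"
      by (rule smooth_k_Ln[OF oU' s1]) (use pos Re_pos_notin in blast)
    have bl: "bounded_linear (\<lambda>z. Im z / (2*pi))"
      by (rule bounded_linear_compose[OF bounded_linear_divide bounded_linear_Im])
    have s3: "smooth_k n U' (\<lambda>y. Im (Ln (G y * a)) / (2*pi))"
      by (rule smooth_k_linear[OF oU' bl s2])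
    show ?thesis unfolding H_def by (rule smooth_k_add[OF oU' smooth_k_const[OF oU'] s3])
  qed
  have agree: "H y = h y" if y: "y \<in> M" "y \<in> U'" for y
  proof -
    define z where "z = f y * a"
    have Gy: "G y = f y" using U(4) y U'U by blast
    have rz: "0 < Re z" using pos[OF y(2)] Gy z_def by simp
    have nz: "norm z = 1" unfolding z_def using nf[OF y(1)] na by (simp add: norm_mult)
    have z0: "z \<noteq> 0" using nz by auto
    have "Re (Ln z) = 0" using z0 nz by simp
    then have Lz: "Ln z = \<i> * of_real (Im (Ln z))" by (simp add: complex_eq_iff)
    have "E (H y) = E (h x0) * E (Im (Ln z) / (2*pi))"
      unfolding H_def Gy z_def[symmetric] by (rule E_add)
    also have "\<dots> = f x0 * z" using E_div Lz exp_Ln[OF z0] fh[OF x0] by metis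
    also have "\<dots> = f y" unfolding z_def using fa by (simp add: mult_ac)
    also have "\<dots> = E (h y)" using fh[OF y(1)] .
    finally obtain n :: int where n: "H y - h y = of_int n" using E_eq by blast
    have b1: "\<bar>H y - h x0\<bar> < 1/4"
    proof -
      have "\<bar>Im (Ln z)\<bar> < pi/2" using Re_Ln_pos_lt_imp[OF rz] .
      then have "\<bar>Im (Ln z)\<bar> / (2*pi) < 1/4" using pi_gt_zero by (simp add: field_simps)
      then show ?thesis unfolding H_def Gy z_def[symmetric] by (simp add: abs_divide)
    qed
    have "y \<in> Ob \<inter> M" using y U'_def by blast
    then have "h y \<in> ball (h x0) (1/4)" using Ob(2) by blast
    then have b2: "\<bar>h y - h x0\<bar> < 1/4" by (simp add: dist_real_def abs_minus_commute)
    have "\<bar>real_of_int n\<bar> < 1" using n b1 b2 by linarith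
    then have "n = 0" by linarith
    then show ?thesis using n by simp
  qed
  show "\<exists>U g. open U \<and> x0 \<in> U \<and> (\<forall>n. smooth_k n U g) \<and> (\<forall>y\<in>M \<inter> U. g y = h y)"
    using oU' x0U' sH agree by blast
qed

lemma lift_exists:
  assumes lpc: "locally path_connected M" and sc: "simply_connected M"
    and f: "f \<in> H0_U1 M"
  shows "\<exists>h. is_lift M f h"
proof -
  have sf: "smooth_on M f" and nf: "\<And>x. x\<in>M \<Longrightarrow> norm (f x) = 1" using f unfolding H0_U1_def by auto
  obtain h where h: "continuous_on M h" "\<And>x. x\<in>M \<Longrightarrow> f x = E (h x)"
    using continuous_lift[OF lpc sc smooth_on_continuous[OF sf] nf] by blast
  have "smooth_on M h" using smooth_lift[OF sf nf h] .
  then show ?thesis unfolding is_lift_def using h(2) by blast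
qed

lemma cnj_mult_self: "norm z = 1 \<Longrightarrow> cnj z * z = 1"
  using complex_norm_square[of z] by (simp add: mult.commute)

lemma lift_sum_const:
  assumes conn: "connected M" and ne: "M \<noteq> {}" and ct: "continuous_on M \<tau>" and tM: "\<tau> ` M \<subseteq> M"
    and f: "f \<in> H0_real M \<tau>" and h: "is_lift M f h"
  shows "\<exists>k::int. \<forall>x\<in>M. h (\<tau> x) + h x = of_int k"
proof -
  have ch: "continuous_on M h" using h smooth_on_continuous unfolding is_lift_def by blast
  have c: "continuous_on M (\<lambda>x. h (\<tau> x) + h x)"
    by (intro continuous_on_add continuous_on_compose2[OF ch ct tM] ch)
  have iv: "\<exists>n::int. h (\<tau> x) + h x = of_int n" if x: "x \<in> M" for x
  proof -
    have tx: "\<tau> x \<in> M" using tM x by blast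
    have "E (h (\<tau> x)) = f (\<tau> x)" using h tx unfolding is_lift_def by simp
    also have "\<dots> = cnj (f x)" using f x unfolding H0_real_def by simp
    also have "\<dots> = E (- h x)" using h x E_minus unfolding is_lift_def by simp
    finally show ?thesis using E_eq by fastforce
  qed
  obtain c0 where c0: "\<forall>x\<in>M. h (\<tau> x) + h x = c0"
    using int_valued_const[OF conn c iv] unfolding constant_on_def by blast
  obtain x0 where x0: "x0 \<in> M" using ne by blast
  obtain n :: int where "h (\<tau> x0) + h x0 = of_int n" using iv[OF x0] by blast
  then show ?thesis using c0 x0 by metis
qed

lemma lift_diff_const:
  assumes conn: "connected M" and ne: "M \<noteq> {}"
    and h: "is_lift M f h" and h': "is_lift M f h'"
  shows "\<exists>c::int. \<forall>x\<in>M. h x - h' x = of_int c"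
proof -
  have ch: "continuous_on M h" using h smooth_on_continuous unfolding is_lift_def by blast
  have ch': "continuous_on M h'" using h' smooth_on_continuous unfolding is_lift_def by blast
  have c: "continuous_on M (\<lambda>x. h x - h' x)" by (intro continuous_on_diff ch ch')
  have iv: "\<exists>n::int. h x - h' x = of_int n" if x: "x \<in> M" for x
    using h h' x E_eq unfolding is_lift_def by metis
  obtain c0 where c0: "\<forall>x\<in>M. h x - h' x = c0"
    using int_valued_const[OF conn c iv] unfolding constant_on_def by blast
  obtain x0 where x0: "x0 \<in> M" using ne by blast
  obtain n :: int where "h x0 - h' x0 = of_int n" using iv[OF x0] by blast
  then show ?thesis using c0 x0 by metis
qed

lemma lift_mod2:
  assumes conn: "connected M" and ne: "M \<noteq> {}" and tM: "\<tau> ` M \<subseteq> M"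
    and h: "is_lift M f h" and h': "is_lift M f h'"
    and k: "\<forall>x\<in>M. h (\<tau> x) + h x = of_int k" and k': "\<forall>x\<in>M. h' (\<tau> x) + h' x = of_int k'"
  shows "k mod 2 = k' mod 2"
proof -
  obtain c :: int where c: "\<forall>x\<in>M. h x - h' x = of_int c" using lift_diff_const[OF conn ne h h'] by blast
  obtain x0 where x0: "x0 \<in> M" using ne by blast
  have tx: "\<tau> x0 \<in> M" using tM x0 by blast
  have "real_of_int k' = real_of_int k - 2 * of_int c"
    using k[rule_format, OF x0] k'[rule_format, OF x0] c[rule_format, OF x0] c[rule_format, OF tx] by linarith
  then have "k' = k - 2 * c" by (metis of_int_diff of_int_eq_iff of_int_mult of_int_numeral)
  then show ?thesis by presburger
qed

lemma eps_eq:
  assumes conn: "connected M" and ne: "M \<noteq> {}" and tM: "\<tau> ` M \<subseteq> M"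
    and h: "is_lift M f h" and k: "\<forall>x\<in>M. h (\<tau> x) + h x = of_int k"
  shows "eps M \<tau> f = k mod 2"
proof -
  have ex: "\<exists>k::int. \<exists>h. is_lift M f h \<and> (\<forall>x\<in>M. h (\<tau> x) + h x = of_int k)" using h k by blast
  define k0 where "k0 = (SOME k::int. \<exists>h. is_lift M f h \<and> (\<forall>x\<in>M. h (\<tau> x) + h x = of_int k))"
  have "\<exists>h. is_lift M f h \<and> (\<forall>x\<in>M. h (\<tau> x) + h x = of_int k0)"
    unfolding k0_def by (rule someI_ex[OF ex])
  then obtain h0 where h0: "is_lift M f h0" "\<forall>x\<in>M. h0 (\<tau> x) + h0 x = of_int k0" by blast
  have "eps M \<tau> f = k0 mod 2" unfolding eps_def k0_def ..
  also have "\<dots> = k mod 2" using lift_mod2[OF conn ne tM h0(1) h h0(2) k] .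
  finally show ?thesis .
qed

lemma bl_E: "bounded_linear (\<lambda>t. 2 * complex_of_real pi * \<i> * complex_of_real t)"
  by (rule bounded_linear_compose[OF bounded_linear_mult_right bounded_linear_of_real])

lemma smooth_on_E: "smooth_on M b \<Longrightarrow> smooth_on M (\<lambda>x. E (b x))"
  by (rule smooth_on_exp[OF smooth_on_linear[OF bl_E]])

theorem mainTheorem2:
  fixes M :: "'a::euclidean_space set" and \<tau> :: "'a \<Rightarrow> 'a"
  assumes "smooth_submanifold M TYPE('b::euclidean_space)"
    and "smooth_involution M \<tau>"
    and "M \<noteq> {}" and "connected M" and "simply_connected M"
  shows
    \<comment> \<open>epsilon is well defined\<close>
    "(\<forall>f\<in>H0_real M \<tau>. (\<exists>h. is_lift M f h) \<and>
        (\<forall>h. is_lift M f h \<longrightarrow> (\<exists>k::int. \<forall>x\<in>M. h (\<tau> x) + h x = of_int k)) \<and>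
        (\<forall>h h' k k'. is_lift M f h \<and> is_lift M f h' \<and>
            (\<forall>x\<in>M. h (\<tau> x) + h x = of_int k) \<and> (\<forall>x\<in>M. h' (\<tau> x) + h' x = of_int k')
            \<longrightarrow> k mod 2 = k' mod 2))
   \<and> \<comment> \<open>the maps are well-defined homomorphisms\<close>
     H0_inv M \<tau> \<subseteq> H0_U1 M
   \<and> (\<forall>g\<in>H0_U1 M. real_map \<tau> g \<in> H0_real M \<tau>)
   \<and> (\<forall>g1\<in>H0_U1 M. \<forall>g2\<in>H0_U1 M. real_map \<tau> (\<lambda>x. g1 x * g2 x) = (\<lambda>x. real_map \<tau> g1 x * real_map \<tau> g2 x))
   \<and> (\<forall>f1\<in>H0_real M \<tau>. \<forall>f2\<in>H0_real M \<tau>. eps M \<tau> (\<lambda>x. f1 x * f2 x) = (eps M \<tau> f1 + eps M \<tau> f2) mod 2)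
   \<and> \<comment> \<open>exactness at H^0(M,U(1))\<close>
     (\<forall>g\<in>H0_U1 M. (\<forall>x\<in>M. real_map \<tau> g x = 1) \<longleftrightarrow> g \<in> H0_inv M \<tau>)
   \<and> \<comment> \<open>exactness at H^0(M;Z_2,conj U(1))\<close>
     (\<forall>f\<in>H0_real M \<tau>. eps M \<tau> f = 0 \<longleftrightarrow> (\<exists>g\<in>H0_U1 M. \<forall>x\<in>M. f x = real_map \<tau> g x))
   \<and> \<comment> \<open>surjectivity of epsilon onto Z_2 = {0,1}\<close>
     (\<forall>f\<in>H0_real M \<tau>. eps M \<tau> f \<in> {0, 1})
   \<and> (\<exists>f\<in>H0_real M \<tau>. eps M \<tau> f = 1)"
proof -
  note sub = assms(1)
  have sm\<tau>: "smooth_on M \<tau>" and tM: "\<tau> ` M \<subseteq> M" and inv: "\<And>x. x \<in> M \<Longrightarrow> \<tau> (\<tau> x) = x"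
    using assms(2) unfolding smooth_involution_def by auto
  have ne: "M \<noteq> {}" and conn: "connected M" and sc: "simply_connected M" using assms by auto
  have lpc: "locally path_connected M" by (rule submanifold_lpc[OF sub])
  have ct: "continuous_on M \<tau>" by (rule smooth_on_continuous[OF sm\<tau>])
  have tx: "\<And>x. x \<in> M \<Longrightarrow> \<tau> x \<in> M" using tM by blast
  have realU: "f \<in> H0_U1 M" if "f \<in> H0_real M \<tau>" for f using that unfolding H0_real_def by auto
  have lift: "\<exists>h. is_lift M f h" if "f \<in> H0_U1 M" for f by (rule lift_exists[OF lpc sc that])
  have liftk: "\<exists>k::int. \<forall>x\<in>M. h (\<tau> x) + h x = of_int k" if "f \<in> H0_real M \<tau>" "is_lift M f h" for f h
    by (rule lift_sum_const[OF conn ne ct tM that])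
  have P1: "\<forall>f\<in>H0_real M \<tau>. (\<exists>h. is_lift M f h) \<and>
        (\<forall>h. is_lift M f h \<longrightarrow> (\<exists>k::int. \<forall>x\<in>M. h (\<tau> x) + h x = of_int k)) \<and>
        (\<forall>h h' k k'. is_lift M f h \<and> is_lift M f h' \<and>
            (\<forall>x\<in>M. h (\<tau> x) + h x = of_int k) \<and> (\<forall>x\<in>M. h' (\<tau> x) + h' x = of_int k')
            \<longrightarrow> k mod 2 = k' mod 2)"
    using lift realU liftk lift_mod2[OF conn ne tM] by blast
  have P2: "H0_inv M \<tau> \<subseteq> H0_U1 M" unfolding H0_inv_def by auto
  have P3: "real_map \<tau> g \<in> H0_real M \<tau>" if g: "g \<in> H0_U1 M" for g
  proof -
    have sg: "smooth_on M g" and ng: "\<And>x. x \<in> M \<Longrightarrow> norm (g x) = 1" using g unfolding H0_U1_def by auto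
    have "smooth_on M (\<lambda>x. cnj (g x) * g (\<tau> x))"
      by (rule smooth_on_mult[OF smooth_on_linear[OF bounded_linear_cnj sg] smooth_on_compose[OF sm\<tau> tM sg]])
    moreover have "norm (cnj (g x) * g (\<tau> x)) = 1" if "x \<in> M" for x
      using ng[OF that] ng[OF tx[OF that]] by (simp add: norm_mult)
    moreover have "cnj (g (\<tau> x)) * g (\<tau> (\<tau> x)) = cnj (cnj (g x) * g (\<tau> x))" if "x \<in> M" for x
      using inv[OF that] by (simp add: mult.commute)
    ultimately show ?thesis unfolding H0_real_def H0_U1_def real_map_def by auto
  qed
  have P4: "real_map \<tau> (\<lambda>x. g1 x * g2 x) = (\<lambda>x. real_map \<tau> g1 x * real_map \<tau> g2 x)" for g1 g2
    unfolding real_map_def by (simp add: mult_ac)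
  have P5: "eps M \<tau> (\<lambda>x. f1 x * f2 x) = (eps M \<tau> f1 + eps M \<tau> f2) mod 2"
    if f1: "f1 \<in> H0_real M \<tau>" and f2: "f2 \<in> H0_real M \<tau>" for f1 f2
  proof -
    obtain h1 where h1: "is_lift M f1 h1" using lift realU f1 by blast
    obtain h2 where h2: "is_lift M f2 h2" using lift realU f2 by blast
    obtain k1 where k1: "\<forall>x\<in>M. h1 (\<tau> x) + h1 x = of_int k1" using liftk[OF f1 h1] by blast
    obtain k2 where k2: "\<forall>x\<in>M. h2 (\<tau> x) + h2 x = of_int k2" using liftk[OF f2 h2] by blast
    have h12: "is_lift M (\<lambda>x. f1 x * f2 x) (\<lambda>x. h1 x + h2 x)"
    proof -
      have "f1 x * f2 x = E (h1 x + h2 x)" if "x \<in> M" for x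
        using h1 h2 that unfolding is_lift_def E_add by simp
      then show ?thesis using h1 h2 unfolding is_lift_def by (auto intro: smooth_on_add)
    qed
    have k12: "\<forall>x\<in>M. (h1 (\<tau> x) + h2 (\<tau> x)) + (h1 x + h2 x) = of_int (k1 + k2)"
    proof
      fix x assume x: "x \<in> M"
      have "h1 (\<tau> x) + h1 x = of_int k1" "h2 (\<tau> x) + h2 x = of_int k2" using k1 k2 x by auto
      then show "(h1 (\<tau> x) + h2 (\<tau> x)) + (h1 x + h2 x) = of_int (k1 + k2)" by simp
    qed
    have "eps M \<tau> (\<lambda>x. f1 x * f2 x) = (k1 + k2) mod 2" using eps_eq[OF conn ne tM h12 k12] .
    also have "\<dots> = (k1 mod 2 + k2 mod 2) mod 2" by (simp add: mod_add_eq)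
    also have "\<dots> = (eps M \<tau> f1 + eps M \<tau> f2) mod 2"
      using eps_eq[OF conn ne tM h1 k1] eps_eq[OF conn ne tM h2 k2] by simp
    finally show ?thesis .
  qed
  have P6: "(\<forall>x\<in>M. real_map \<tau> g x = 1) \<longleftrightarrow> g \<in> H0_inv M \<tau>" if g: "g \<in> H0_U1 M" for g
  proof -
    have ng: "\<And>x. x \<in> M \<Longrightarrow> norm (g x) = 1" using g unfolding H0_U1_def by auto
    have "real_map \<tau> g x = 1 \<longleftrightarrow> g (\<tau> x) = g x" if x: "x \<in> M" for x
    proof
      assume a: "real_map \<tau> g x = 1"
      have "g x = g x * (cnj (g x) * g (\<tau> x))" using a unfolding real_map_def by simp
      also have "\<dots> = (cnj (g x) * g x) * g (\<tau> x)" by (simp add: mult_ac)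
      also have "\<dots> = g (\<tau> x)" using cnj_mult_self[OF ng[OF x]] by simp
      finally show "g (\<tau> x) = g x" by simp
    next
      assume "g (\<tau> x) = g x"
      then show "real_map \<tau> g x = 1" unfolding real_map_def using cnj_mult_self[OF ng[OF x]] by simp
    qed
    then show ?thesis using g unfolding H0_inv_def by auto
  qed
  have P7: "eps M \<tau> f = 0 \<longleftrightarrow> (\<exists>g\<in>H0_U1 M. \<forall>x\<in>M. f x = real_map \<tau> g x)"
    if f: "f \<in> H0_real M \<tau>" for f
  proof
    assume e0: "eps M \<tau> f = 0"
    obtain h where h: "is_lift M f h" using lift realU f by blast
    obtain k where k: "\<forall>x\<in>M. h (\<tau> x) + h x = of_int k" using liftk[OF f h] by blast
    have "k mod 2 = 0" using eps_eq[OF conn ne tM h k] e0 by simp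
    then obtain m where m: "k = 2 * m" by auto
    define b where "b x = (of_int m - h x) / 2" for x
    have sh: "smooth_on M h" using h unfolding is_lift_def by blast
    have sb: "smooth_on M b"
    proof -
      have "smooth_on M (\<lambda>x. of_int m / 2 + (- h x / 2))"
        by (intro smooth_on_add smooth_on_const smooth_on_linear[OF bounded_linear_divide[of 2, THEN bounded_linear_compose, OF bounded_linear_minus[OF bounded_linear_ident]] sh])
      then show ?thesis by (rule smooth_on_cong) (simp add: b_def field_simps)
    qed
    define g where "g x = E (b x)" for x
    have gU: "g \<in> H0_U1 M" unfolding H0_U1_def g_def using smooth_on_E[OF sb] norm_E by auto
    have "f x = real_map \<tau> g x" if x: "x \<in> M" for x
    proof -
      have hk: "h (\<tau> x) = of_int k - h x" using k x by auto
      have "real_map \<tau> g x = E (- b x) * E (b (\<tau> x))" unfolding real_map_def g_def E_minus ..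
      also have "\<dots> = E (b (\<tau> x) - b x)" using E_add[of "- b x" "b (\<tau> x)"] by simp
      also have "b (\<tau> x) - b x = h x + of_int (- m)" unfolding b_def hk m by (simp add: field_simps)
      also have "E (h x + of_int (- m)) = E (h x)"
      proof -
        have "E (h x + of_int (- m)) = E (h x) * E (of_int (- m))" by (rule E_add)
        also have "\<dots> = E (h x)" by (simp only: E_int mult_1_right)
        finally show ?thesis .
      qed
      also have "\<dots> = f x" using h x unfolding is_lift_def by simp
      finally show ?thesis by simp
    qed
    then show "\<exists>g\<in>H0_U1 M. \<forall>x\<in>M. f x = real_map \<tau> g x" using gU by blast
  next
    assume "\<exists>g\<in>H0_U1 M. \<forall>x\<in>M. f x = real_map \<tau> g x"
    then obtain g where g: "g \<in> H0_U1 M" "\<forall>x\<in>M. f x = real_map \<tau> g x" by blast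
    obtain a where a: "is_lift M g a" using lift g(1) by blast
    have sa: "smooth_on M a" using a unfolding is_lift_def by blast
    define h where "h x = a (\<tau> x) + - a x" for x
    have sh: "smooth_on M h" unfolding h_def
      by (intro smooth_on_add smooth_on_compose[OF sm\<tau> tM sa] smooth_on_linear[OF bounded_linear_minus[OF bounded_linear_ident] sa])
    have "f x = E (h x)" if x: "x \<in> M" for x
    proof -
      have "E (h x) = E (a (\<tau> x)) * cnj (E (a x))" unfolding h_def E_add E_minus ..
      also have "\<dots> = g (\<tau> x) * cnj (g x)" using a x tx[OF x] unfolding is_lift_def by simp
      also have "\<dots> = f x" using g(2) x unfolding real_map_def by (simp add: mult.commute)
      finally show ?thesis by simp
    qed
    then have hl: "is_lift M f h" unfolding is_lift_def using sh by blast
    have "\<forall>x\<in>M. h (\<tau> x) + h x = of_int 0" unfolding h_def using inv by simp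
    from eps_eq[OF conn ne tM hl this] show "eps M \<tau> f = 0" by simp
  qed
  have P8: "eps M \<tau> f \<in> {0, 1}" for f
  proof -
    have "x mod 2 = 0 \<or> x mod 2 = 1" for x :: int by presburger
    then show ?thesis unfolding eps_def by auto
  qed
  have P9: "\<exists>f\<in>H0_real M \<tau>. eps M \<tau> f = 1"
  proof
    have Eh: "E (1/2) = -1"
    proof -
      have "2 * complex_of_real pi * \<i> * complex_of_real (1/2) = pi * \<i>" by simp
      then show ?thesis by (simp add: exp_pi_i')
    qed
    show fR: "(\<lambda>x. -1) \<in> H0_real M \<tau>" unfolding H0_real_def H0_U1_def by (auto intro: smooth_on_const)
    have hl: "is_lift M (\<lambda>x. -1) (\<lambda>x. 1/2)" unfolding is_lift_def using Eh by (auto intro: smooth_on_const)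
    have "\<forall>x\<in>M. (1/2::real) + 1/2 = of_int 1" by simp
    from eps_eq[OF conn ne tM hl this] show "eps M \<tau> (\<lambda>x. -1) = 1" by simp
  qed
  show ?thesis using P1 P2 P3 P4 P5 P6 P7 P8 P9 by blast
qed

end
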